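(* Consider the descriptor system $Ex_{k+1}=Ax_k+Bu_k+w_k$, $y_k=Hx_k+v_{k-1}$ with $E,A\in\mathbb{R}^{n_1\times n}$, $B\in\mathbb{R}^{n_1\times q}$, $H\in\mathbb{R}^{m\times n}$, where $\begin{bmatrix}E^T&H^T\end{bmatrix}^T$ has full column rank, and let $P_0,Q,R$ be symmetric positive definite, $P_0^{(-)}=AP_0A^T+Q$. Let $\bar x_0$, inputs $u_0,\dots,u_{T-1}$, measurements $y_1,\dots,y_T$ be given, and let $N$ be an integer with $1\le N\le T-1$. Define the full information objective $$J_T(x_1,\dots,x_T)=\|Ex_1-A\bar x_0-Bu_0\|^2_{P_0^{(-)}}+\sum_{k=1}^{T-1}\|Ex_{k+1}-Ax_k-Bu_k\|_Q^2+\sum_{k=1}^{T}\|y_k-Hx_k\|_R^2.$$ Let $\hat x_k^{(+)},P_k^{(+)},P_k^{(-)}$ be given by the recursion in the context, and for $k\ge1$ define $$\Gamma_k^{sm}=\big((P_k^{(+)})^{-1}+A^TQ^{-1}A\big)^{-1},\qquad \hat x_k^{sm}(x_{k+1})=\hat x_k^{(+)}+\Gamma_k^{sm}A^TQ^{-1}\big(Ex_{k+1}-A\hat x_k^{(+)}-Bu_k\big),$$ and $$SC(\{x_k\}_{T-N}^T)=\|Ex_{T-N}-A\hat x^{(+)}_{T-N-1}-Bu_{T-N-1}\|^2_{P^{(-)}_{T-N-1}}+\sum_{k=T-N}^{T-1}\|Ex_{k+1}-Ax_k-Bu_k\|_Q^2+\sum_{k=T-N}^{T}\|y_k-Hx_k\|_R^2.$$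 Then there is a constant $c$ independent of $x_1,\dots,x_T$ such that for all $x_1,\dots,x_T\in\mathbb{R}^n$, $$J_T(x_1,\dots,x_T)=\sum_{k=1}^{T-N-1}\|x_k-\hat x_k^{sm}(x_{k+1})\|^2_{\Gamma_k^{sm}}+SC(\{x_k\}_{T-N}^T)+c.$$ In particular, the full information problem of minimizing $J_T$ subject to any constraints on $x_1,\dots,x_T$ is equivalent to minimizing the right-hand side subject to the same constraints.
   Context: Notation: for symmetric positive definite $S$, $\|z\|_S^2:=z^TS^{-1}z$. Recursion: $\hat x_0^{(+)}=\bar x_0$, $P_0^{(+)}=P_0$, $P_0^{(-)}=AP_0A^T+Q$, and for $k\ge1$: $P_k^{(+)}=(E^T(P_{k-1}^{(-)})^{-1}E+H^TR^{-1}H)^{-1}$, $P_k^{(-)}=AP_k^{(+)}A^T+Q$, $\hat x_k^{(+)}=P_k^{(+)}H^TR^{-1}y_k+P_k^{(+)}E^T(P_{k-1}^{(-)})^{-1}(A\hat x_{k-1}^{(+)}+Bu_{k-1})$. An empty sum is zero. *)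

theory Defs
  imports "HOL-Analysis.Analysis"
begin

definition spd :: "real^'n^'n \<Rightarrow> bool" where
  "spd S \<longleftrightarrow> transpose S = S \<and> (\<forall>z. z \<noteq> 0 \<longrightarrow> z \<bullet> (S *v z) > 0)"

definition wnorm :: "real^'n^'n \<Rightarrow> real^'n \<Rightarrow> real" where
  "wnorm S z = z \<bullet> (matrix_inv S *v z)"

definition stack :: "real^'n^'a \<Rightarrow> real^'n^'b \<Rightarrow> real^'n^('a + 'b)" where
  "stack E H = (\<chi> i. case i of Inl a \<Rightarrow> E $ a | Inr b \<Rightarrow> H $ b)"

fun kf :: "real^'n^'n1 \<Rightarrow> real^'n^'n1 \<Rightarrow> real^'q^'n1 \<Rightarrow> real^'n^'m \<Rightarrow>
           real^'n^'n \<Rightarrow> real^'n1^'n1 \<Rightarrow> real^'m^'m \<Rightarrow> real^'n \<Rightarrow>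
           (nat \<Rightarrow> real^'q) \<Rightarrow> (nat \<Rightarrow> real^'m) \<Rightarrow> nat \<Rightarrow> (real^'n) \<times> (real^'n^'n)" where
  "kf E A B H P0 Q R x0 u y 0 = (x0, P0)"
| "kf E A B H P0 Q R x0 u y (Suc k) =
     (let (xh, Pp) = kf E A B H P0 Q R x0 u y k;
          Pm = A ** Pp ** transpose A + Q;
          Pn = matrix_inv (transpose E ** matrix_inv Pm ** E
                           + transpose H ** matrix_inv R ** H)
      in (Pn *v (transpose H *v (matrix_inv R *v y (Suc k)))
          + Pn *v (transpose E *v (matrix_inv Pm *v (A *v xh + B *v u k))), Pn))"

definition xplus where "xplus E A B H P0 Q R x0 u y k = fst (kf E A B H P0 Q R x0 u y k)"
definition Pplus where "Pplus E A B H P0 Q R x0 u y k = snd (kf E A B H P0 Q R x0 u y k)"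
definition Pminus where
  "Pminus E A B H P0 Q R x0 u y k = A ** Pplus E A B H P0 Q R x0 u y k ** transpose A + Q"

definition Gsm where
  "Gsm E A B H P0 Q R x0 u y k =
     matrix_inv (matrix_inv (Pplus E A B H P0 Q R x0 u y k) + transpose A ** matrix_inv Q ** A)"

definition xsm where
  "xsm E A B H P0 Q R x0 u y k xnext =
     xplus E A B H P0 Q R x0 u y k
     + Gsm E A B H P0 Q R x0 u y k *v (transpose A *v (matrix_inv Q *v
          (E *v xnext - A *v xplus E A B H P0 Q R x0 u y k - B *v u k)))"

definition JT where
  "JT E A B H P0 Q R x0 u y T (x :: nat \<Rightarrow> real^'n) =
     wnorm (A ** P0 ** transpose A + Q) (E *v x 1 - A *v x0 - B *v u 0)
     + (\<Sum>k=1..T-1. wnorm Q (E *v x (k+1) - A *v x k - B *v u k))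
     + (\<Sum>k=1..T. wnorm R (y k - H *v x k))"

definition SC where
  "SC E A B H P0 Q R x0 u y T N (x :: nat \<Rightarrow> real^'n) =
     wnorm (Pminus E A B H P0 Q R x0 u y (T-N-1))
       (E *v x (T-N) - A *v xplus E A B H P0 Q R x0 u y (T-N-1) - B *v u (T-N-1))
     + (\<Sum>k=T-N..T-1. wnorm Q (E *v x (k+1) - A *v x k - B *v u k))
     + (\<Sum>k=T-N..T. wnorm R (y k - H *v x k))"

end

theory Submission imports Defs begin

declare transpose_matrix_vector[simp del]

lemma ip_transp: "(u::real^'m) \<bullet> ((M::real^'n^'m) *v v) = (transpose M *v u) \<bullet> v"
  by (simp add: transpose_matrix_vector dot_lmul_matrix)

lemma symm_ip: "transpose (S::real^'n^'n) = S \<Longrightarrow> u \<bullet> (S *v v) = v \<bullet> (S *v u)"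
  by (metis ip_transp inner_commute)

lemma transpose_add: "transpose ((A::real^'n^'m) + B) = transpose A + transpose B"
  by (simp add: transpose_def vec_eq_iff)

lemma transpose_diff: "transpose ((A::real^'n^'m) - B) = transpose A - transpose B"
  by (simp add: transpose_def vec_eq_iff)

lemma congr_ip: "z \<bullet> ((transpose (M::real^'n^'m) ** S ** M) *v w) = (M *v z) \<bullet> (S *v (M *v w))"
  by (simp add: matrix_vector_mul_assoc[symmetric] ip_transp)

lemma congr_symm: "transpose S = S \<Longrightarrow> transpose (transpose (M::real^'n^'m) ** S ** M) = transpose M ** S ** M"
  by (simp add: matrix_transpose_mul matrix_mul_assoc)

lemma inv_props: "invertible (M::real^'n^'n) \<Longrightarrow> M ** matrix_inv M = mat 1 \<and> matrix_inv M ** M = mat 1"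
  unfolding matrix_inv_def invertible_def by (rule someI_ex)

lemma inv_left_unique: assumes "invertible (M::real^'n^'n)" "B ** M = mat 1" shows "matrix_inv M = B"
proof -
  have MM: "M ** matrix_inv M = mat 1" using inv_props[OF assms(1)] by (rule conjunct1)
  have "B = B ** (M ** matrix_inv M)" by (simp only: MM matrix_mul_rid)
  also have "\<dots> = matrix_inv M" by (simp only: matrix_mul_assoc assms(2) matrix_mul_lid)
  finally show ?thesis by (rule sym)
qed

lemma inv_right_unique: assumes "(M::real^'n^'n) ** B = mat 1" shows "matrix_inv M = B"
proof -
  have inv: "invertible M" using assms by (subst invertible_right_inverse) (rule exI)
  have "B ** M = mat 1" using assms by (subst matrix_left_right_inverse[symmetric])
  then show ?thesis by (rule inv_left_unique[OF inv])
qed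

lemma inv_inv: assumes "invertible (M::real^'n^'n)" shows "matrix_inv (matrix_inv M) = M"
proof (rule inv_right_unique)
  show "matrix_inv M ** M = mat 1" using inv_props[OF assms] by (rule conjunct2)
qed

lemma inv_invertible: assumes "invertible (M::real^'n^'n)" shows "invertible (matrix_inv M)"
  unfolding invertible_def
proof (intro exI conjI)
  show "matrix_inv M ** M = mat 1" using inv_props[OF assms] by (rule conjunct2)
  show "M ** matrix_inv M = mat 1" using inv_props[OF assms] by (rule conjunct1)
qed

lemma inv_symm: assumes "invertible (S::real^'n^'n)" "transpose S = S"
  shows "transpose (matrix_inv S) = matrix_inv S"
proof -
  have tS: "transpose (matrix_inv S) ** S = mat 1"
  proof -
    have "transpose (S ** matrix_inv S) = mat 1" using inv_props[OF assms(1)] by (simp only: transpose_mat)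
    then show ?thesis by (simp only: matrix_transpose_mul assms(2))
  qed
  show ?thesis using inv_left_unique[OF assms(1) tS] by (rule sym)
qed

lemma spd_invertible: assumes "spd (S::real^'n^'n)" shows "invertible S"
proof -
  have "\<forall>x. S *v x = 0 \<longrightarrow> x = 0"
    using assms unfolding spd_def by (metis inner_zero_right less_irrefl)
  then show ?thesis using matrix_left_invertible_ker invertible_left_inverse by blast
qed

lemma spd_inv: assumes "spd (S::real^'n^'n)" shows "spd (matrix_inv S)"
proof -
  have inv: "invertible S" using spd_invertible assms by blast
  have sy: "transpose S = S" using assms spd_def by blast
  have "z \<bullet> (matrix_inv S *v z) > 0" if "z \<noteq> 0" for z
  proof -
    define v where "v = matrix_inv S *v z"
    have zv: "z = S *v v" unfolding v_def using inv_props[OF inv]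
      by (simp add: matrix_vector_mul_assoc)
    have "v \<noteq> 0" using zv that by auto
    then have "v \<bullet> (S *v v) > 0" using assms spd_def by blast
    then show ?thesis unfolding v_def[symmetric] using zv by (simp add: inner_commute)
  qed
  then show ?thesis unfolding spd_def using inv_symm[OF inv sy] by blast
qed

lemma spd_nonneg: "spd (S::real^'n^'n) \<Longrightarrow> z \<bullet> (S *v z) \<ge> 0"
  unfolding spd_def by (cases "z = 0") (auto intro: less_imp_le)

lemma quad_expand: assumes "transpose (S::real^'n^'n) = S"
  shows "(p - q) \<bullet> (S *v (p - q)) = p \<bullet> (S *v p) - 2 * (p \<bullet> (S *v q)) + q \<bullet> (S *v q)"
  using symm_ip[OF assms, of q p]
  by (simp add: matrix_vector_mult_diff_distrib inner_diff_left inner_diff_right)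


lemma spd_K:
  fixes E :: "real^'n^'n1" and H :: "real^'n^'m" and P :: "real^'n1^'n1" and R :: "real^'m^'m"
  assumes "spd P" "spd R" and inj: "\<And>z. E *v z = 0 \<Longrightarrow> H *v z = 0 \<Longrightarrow> z = 0"
  shows "spd (transpose E ** matrix_inv P ** E + transpose H ** matrix_inv R ** H)"
proof -
  have sP: "spd (matrix_inv P)" and sR: "spd (matrix_inv R)" using spd_inv assms by blast+
  have tP: "transpose (matrix_inv P) = matrix_inv P" and tR: "transpose (matrix_inv R) = matrix_inv R"
    using sP sR spd_def by blast+
  have "z \<bullet> ((transpose E ** matrix_inv P ** E + transpose H ** matrix_inv R ** H) *v z) > 0"
    if "z \<noteq> 0" for z
  proof -
    have eq: "z \<bullet> ((transpose E ** matrix_inv P ** E + transpose H ** matrix_inv R ** H) *v z)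
      = (E *v z) \<bullet> (matrix_inv P *v (E *v z)) + (H *v z) \<bullet> (matrix_inv R *v (H *v z))"
      by (simp only: matrix_vector_mult_add_rdistrib inner_add_right congr_ip)
    have "E *v z \<noteq> 0 \<or> H *v z \<noteq> 0" using inj that by blast
    moreover have "(E *v z) \<bullet> (matrix_inv P *v (E *v z)) \<ge> 0" using spd_nonneg sP by blast
    moreover have "(H *v z) \<bullet> (matrix_inv R *v (H *v z)) \<ge> 0" using spd_nonneg sR by blast
    moreover have "E *v z \<noteq> 0 \<Longrightarrow> (E *v z) \<bullet> (matrix_inv P *v (E *v z)) > 0" using sP spd_def by blast
    moreover have "H *v z \<noteq> 0 \<Longrightarrow> (H *v z) \<bullet> (matrix_inv R *v (H *v z)) > 0" using sR spd_def by blast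
    ultimately show ?thesis unfolding eq by linarith
  qed
  moreover have "transpose (transpose E ** matrix_inv P ** E + transpose H ** matrix_inv R ** H)
     = transpose E ** matrix_inv P ** E + transpose H ** matrix_inv R ** H"
    by (simp add: transpose_add congr_symm tP tR)
  ultimately show ?thesis unfolding spd_def by blast
qed

lemma spd_M:
  fixes A :: "real^'n^'n1" and K :: "real^'n^'n" and Q :: "real^'n1^'n1"
  assumes "spd K" "spd Q"
  shows "spd (K + transpose A ** matrix_inv Q ** A)"
proof -
  have sQ: "spd (matrix_inv Q)" using spd_inv assms by blast
  have tQ: "transpose (matrix_inv Q) = matrix_inv Q" using sQ spd_def by blast
  have "z \<bullet> ((K + transpose A ** matrix_inv Q ** A) *v z) > 0" if "z \<noteq> 0" for z
  proof -
    have eq: "z \<bullet> ((K + transpose A ** matrix_inv Q ** A) *v z)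
      = z \<bullet> (K *v z) + (A *v z) \<bullet> (matrix_inv Q *v (A *v z))"
      by (simp only: matrix_vector_mult_add_rdistrib inner_add_right congr_ip)
    have "z \<bullet> (K *v z) > 0" using assms(1) that spd_def by blast
    moreover have "(A *v z) \<bullet> (matrix_inv Q *v (A *v z)) \<ge> 0" using spd_nonneg sQ by blast
    ultimately show ?thesis unfolding eq by linarith
  qed
  moreover have "transpose (K + transpose A ** matrix_inv Q ** A) = K + transpose A ** matrix_inv Q ** A"
    using assms(1) by (simp add: transpose_add congr_symm tQ spd_def)
  ultimately show ?thesis unfolding spd_def by blast
qed

lemma spd_Pm:
  fixes A :: "real^'n^'n1" and P :: "real^'n^'n" and Q :: "real^'n1^'n1"
  assumes "spd P" "spd Q"
  shows "spd (A ** P ** transpose A + Q)"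
proof -
  have "z \<bullet> ((A ** P ** transpose A + Q) *v z) > 0" if "z \<noteq> 0" for z
  proof -
    have eq: "z \<bullet> ((A ** P ** transpose A + Q) *v z)
      = (transpose A *v z) \<bullet> (P *v (transpose A *v z)) + z \<bullet> (Q *v z)"
      using congr_ip[of z "transpose A" P z]
      by (simp only: transpose_transpose matrix_vector_mult_add_rdistrib inner_add_right)
    have "z \<bullet> (Q *v z) > 0" using assms(2) that spd_def by blast
    moreover have "(transpose A *v z) \<bullet> (P *v (transpose A *v z)) \<ge> 0" using spd_nonneg assms(1) by blast
    ultimately show ?thesis unfolding eq by linarith
  qed
  moreover have "transpose (A ** P ** transpose A + Q) = A ** P ** transpose A + Q"
    using assms congr_symm[of P "transpose A"] by (simp add: transpose_add spd_def)
  ultimately show ?thesis unfolding spd_def by blast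
qed

lemma woodbury:
  fixes A :: "real^'n^'n1" and K :: "real^'n^'n" and Q :: "real^'n1^'n1"
  assumes iK: "invertible K" and iQ: "invertible Q" and iM: "invertible (K + transpose A ** matrix_inv Q ** A)"
  shows "matrix_inv (A ** matrix_inv K ** transpose A + Q)
    = matrix_inv Q - matrix_inv Q ** A ** matrix_inv (K + transpose A ** matrix_inv Q ** A) ** transpose A ** matrix_inv Q"
proof (rule inv_right_unique)
  define Qi where "Qi = matrix_inv Q"
  define Ki where "Ki = matrix_inv K"
  define G where "G = matrix_inv (K + transpose A ** Qi ** A)"
  have QQi: "Q ** Qi = mat 1" using inv_props[OF iQ] Qi_def by blast
  have KiK: "Ki ** K = mat 1" using inv_props[OF iK] Ki_def by blast
  have MG: "(K + transpose A ** Qi ** A) ** G = mat 1" using inv_props[OF iM] Qi_def G_def by blast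
  have "(A ** Ki ** transpose A + Q) ** (Qi - Qi ** A ** G ** transpose A ** Qi) *v v = v" for v
  proof -
    define t where "t = transpose A *v (Qi *v v)"
    define g where "g = G *v t"
    have Mg: "K *v g + transpose A *v (Qi *v (A *v g)) = t"
    proof -
      have "(K + transpose A ** Qi ** A) *v g = t"
        unfolding g_def by (simp only: matrix_vector_mul_assoc MG matrix_vector_mul_lid)
      then show ?thesis by (simp only: matrix_vector_mult_add_rdistrib matrix_vector_mul_assoc[symmetric])
    qed
    have Kit: "Ki *v t = g + Ki *v (transpose A *v (Qi *v (A *v g)))"
    proof -
      have "Ki *v t = Ki *v (K *v g) + Ki *v (transpose A *v (Qi *v (A *v g)))"
        using Mg by (metis matrix_vector_right_distrib)
      also have "Ki *v (K *v g) = g" using KiK by (simp add: matrix_vector_mul_assoc)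
      finally show ?thesis .
    qed
    have "(A ** Ki ** transpose A + Q) ** (Qi - Qi ** A ** G ** transpose A ** Qi) *v v
      = A *v (Ki *v t) - A *v (Ki *v (transpose A *v (Qi *v (A *v g)))) + (Q ** Qi) *v v - (Q ** Qi) *v (A *v g)"
      unfolding t_def g_def
      by (simp add: matrix_vector_mul_assoc[symmetric] matrix_vector_mult_add_rdistrib
          matrix_vector_mult_diff_rdistrib matrix_vector_mult_diff_distrib)
    also have "\<dots> = v" using QQi Kit by (simp add: matrix_vector_right_distrib)
    finally show ?thesis .
  qed
  then show "(A ** matrix_inv K ** transpose A + Q) ** (matrix_inv Q - matrix_inv Q ** A **
      matrix_inv (K + transpose A ** matrix_inv Q ** A) ** transpose A ** matrix_inv Q) = mat 1"
    unfolding Qi_def Ki_def G_def by (simp add: matrix_eq)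
qed


lemma step_identity:
  fixes E A :: "real^'n^'n1" and H :: "real^'n^'m" and Pm Q :: "real^'n1^'n1" and R :: "real^'m^'m"
    and a b :: "real^'n1" and yv :: "real^'m" and K Pn G :: "real^'n^'n" and xh :: "real^'n"
  assumes spdPm: "spd Pm" and spdQ: "spd Q" and spdR: "spd R"
    and Kdef: "K = transpose E ** matrix_inv Pm ** E + transpose H ** matrix_inv R ** H"
    and spdK: "spd K"
    and Pndef: "Pn = matrix_inv K"
    and xhdef: "xh = Pn *v (transpose H *v (matrix_inv R *v yv)) + Pn *v (transpose E *v (matrix_inv Pm *v a))"
    and Gdef: "G = matrix_inv (matrix_inv Pn + transpose A ** matrix_inv Q ** A)"
  shows "\<exists>c. \<forall>z w. wnorm Pm (E *v z - a) + wnorm R (yv - H *v z) + wnorm Q (E *v w - A *v z - b)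
     = wnorm G (z - (xh + G *v (transpose A *v (matrix_inv Q *v (E *v w - A *v xh - b)))))
       + wnorm (A ** Pn ** transpose A + Q) (E *v w - A *v xh - b) + c"
proof -
  define Pi where "Pi = matrix_inv Pm"
  define Ri where "Ri = matrix_inv R"
  define Qi where "Qi = matrix_inv Q"
  have tPi: "transpose Pi = Pi" using spd_inv[OF spdPm] Pi_def spd_def by blast
  have tRi: "transpose Ri = Ri" using spd_inv[OF spdR] Ri_def spd_def by blast
  have tQi: "transpose Qi = Qi" using spd_inv[OF spdQ] Qi_def spd_def by blast
  have tK: "transpose K = K" using spdK spd_def by blast
  have iK: "invertible K" using spd_invertible[OF spdK] .
  have iQ: "invertible Q" using spd_invertible[OF spdQ] .
  have PnK: "matrix_inv Pn = K" unfolding Pndef using inv_inv[OF iK] .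
  define Mm where "Mm = K + transpose A ** Qi ** A"
  have spdM: "spd Mm" unfolding Mm_def Qi_def using spd_M[OF spdK spdQ] .
  have iM: "invertible Mm" using spd_invertible[OF spdM] .
  have tM: "transpose Mm = Mm" using spdM spd_def by blast
  have GM: "G = matrix_inv Mm" unfolding Gdef PnK Mm_def Qi_def ..
  have MG: "Mm ** G = mat 1" unfolding GM using inv_props[OF iM] by (rule conjunct1)
  have iG: "matrix_inv G = Mm" unfolding GM using inv_inv[OF iM] .
  have tG: "transpose G = G" unfolding GM using inv_symm[OF iM tM] .
  have iM': "invertible (K + transpose A ** matrix_inv Q ** A)" using iM unfolding Mm_def Qi_def .
  have wood: "matrix_inv (A ** Pn ** transpose A + Q) = Qi - Qi ** A ** G ** transpose A ** Qi"
    unfolding Pndef GM Mm_def Qi_def by (rule woodbury[OF iK iQ iM'])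
  define bv where "bv = transpose E *v (Pi *v a) + transpose H *v (Ri *v yv)"
  have xhb: "xh = Pn *v bv" unfolding xhdef bv_def Pi_def Ri_def
    by (simp only: matrix_vector_right_distrib add.commute)
  have Kxh: "K *v xh = bv" unfolding xhb Pndef
    using inv_props[OF iK] by (simp add: matrix_vector_mul_assoc)
  define c where "c = a \<bullet> (Pi *v a) + yv \<bullet> (Ri *v yv) - xh \<bullet> (K *v xh)"
  show ?thesis
  proof (intro exI allI)
    fix z w
    define d where "d = z - xh"
    define s where "s = E *v w - A *v xh - b"
    define v where "v = transpose A *v (Qi *v s)"
    define e where "e = G *v v"
    have ipT: "(M *v p) \<bullet> q = p \<bullet> (transpose M *v q)" for M :: "real^'n^'k" and p q
      using ip_transp[of p "transpose M" q] by (simp add: inner_commute)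
    have h1: "wnorm Pm (E *v z - a) = z \<bullet> ((transpose E ** Pi ** E) *v z) - 2 * (z \<bullet> (transpose E *v (Pi *v a))) + a \<bullet> (Pi *v a)"
      unfolding wnorm_def Pi_def[symmetric] quad_expand[OF tPi] congr_ip ipT[of E z] ..
    have h2: "wnorm R (yv - H *v z) = yv \<bullet> (Ri *v yv) - 2 * (z \<bullet> (transpose H *v (Ri *v yv))) + z \<bullet> ((transpose H ** Ri ** H) *v z)"
      unfolding wnorm_def Ri_def[symmetric] quad_expand[OF tRi] congr_ip symm_ip[OF tRi, of yv "H *v z"] ipT[of H z] ..
    have h3: "z \<bullet> (K *v z) = z \<bullet> ((transpose E ** Pi ** E) *v z) + z \<bullet> ((transpose H ** Ri ** H) *v z)"
      unfolding Kdef Pi_def Ri_def by (simp only: matrix_vector_mult_add_rdistrib inner_add_right)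
    have h4: "z \<bullet> bv = z \<bullet> (transpose E *v (Pi *v a)) + z \<bullet> (transpose H *v (Ri *v yv))"
      unfolding bv_def by (simp only: inner_add_right)
    have h5: "d \<bullet> (K *v d) = z \<bullet> (K *v z) - 2 * (z \<bullet> bv) + xh \<bullet> (K *v xh)"
      unfolding d_def quad_expand[OF tK] Kxh ..
    have h6: "E *v w - A *v z - b = s - A *v d"
      unfolding s_def d_def matrix_vector_mult_diff_distrib by (simp add: algebra_simps)
    have h7: "wnorm Q (s - A *v d) = s \<bullet> (Qi *v s) - 2 * (d \<bullet> v) + d \<bullet> ((transpose A ** Qi ** A) *v d)"
    proof -
      have F: "s \<bullet> (Qi *v (A *v d)) = d \<bullet> v"
        unfolding v_def symm_ip[OF tQi, of s "A *v d"] ipT[of A d] ..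
      show ?thesis unfolding wnorm_def Qi_def[symmetric] quad_expand[OF tQi] congr_ip F ..
    qed
    have h8: "Mm *v e = v" unfolding e_def by (simp add: matrix_vector_mul_assoc MG)
    have h9: "wnorm G (z - (xh + e)) = d \<bullet> (Mm *v d) - 2 * (d \<bullet> v) + e \<bullet> v"
    proof -
      have de: "z - (xh + e) = d - e" unfolding d_def by (simp add: algebra_simps)
      show ?thesis unfolding wnorm_def iG de quad_expand[OF tM] h8 ..
    qed
    have h10: "d \<bullet> (Mm *v d) = d \<bullet> (K *v d) + d \<bullet> ((transpose A ** Qi ** A) *v d)"
      unfolding Mm_def by (simp only: matrix_vector_mult_add_rdistrib inner_add_right)
    have h11: "wnorm (A ** Pn ** transpose A + Q) s = s \<bullet> (Qi *v s) - v \<bullet> (G *v v)"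
    proof -
      have "s \<bullet> ((Qi ** A ** G ** transpose A ** Qi) *v s) = s \<bullet> (Qi *v (A *v (G *v v)))"
        unfolding v_def by (simp only: matrix_vector_mul_assoc[symmetric])
      also have "\<dots> = (A *v (G *v v)) \<bullet> (Qi *v s)" using symm_ip[OF tQi] .
      also have "\<dots> = (G *v v) \<bullet> v" unfolding v_def by (rule ipT)
      also have "\<dots> = v \<bullet> (G *v v)" by (rule inner_commute)
      finally have "s \<bullet> ((Qi ** A ** G ** transpose A ** Qi) *v s) = v \<bullet> (G *v v)" .
      then show ?thesis unfolding wnorm_def wood
        by (simp only: matrix_vector_mult_diff_rdistrib inner_diff_right)
    qed
    have h12: "e \<bullet> v = v \<bullet> (G *v v)" unfolding e_def by (rule inner_commute)
    show "wnorm Pm (E *v z - a) + wnorm R (yv - H *v z) + wnorm Q (E *v w - A *v z - b)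
     = wnorm G (z - (xh + G *v (transpose A *v (matrix_inv Q *v (E *v w - A *v xh - b)))))
       + wnorm (A ** Pn ** transpose A + Q) (E *v w - A *v xh - b) + c"
      unfolding Qi_def[symmetric] s_def[symmetric] v_def[symmetric] e_def[symmetric] h6
      using h1 h2 h3 h4 h5 h7 h9 h10 h11 h12 unfolding c_def by linarith
  qed
qed


lemma kf_Suc_parts:
  "Pplus E A B H P0 Q R x0 u y (Suc k) = matrix_inv (transpose E ** matrix_inv (Pminus E A B H P0 Q R x0 u y k) ** E
      + transpose H ** matrix_inv R ** H)"
  "xplus E A B H P0 Q R x0 u y (Suc k) =
      Pplus E A B H P0 Q R x0 u y (Suc k) *v (transpose H *v (matrix_inv R *v y (Suc k)))
      + Pplus E A B H P0 Q R x0 u y (Suc k) *v (transpose E *v (matrix_inv (Pminus E A B H P0 Q R x0 u y k) *v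
          (A *v xplus E A B H P0 Q R x0 u y k + B *v u k)))"
  by (cases "kf E A B H P0 Q R x0 u y k"; simp add: Pplus_def xplus_def Pminus_def Let_def)+

lemma kf_0_parts:
  "Pplus E A B H P0 Q R x0 u y 0 = P0" "xplus E A B H P0 Q R x0 u y 0 = x0"
  by (simp_all add: Pplus_def xplus_def)


theorem theorem3:
  fixes E A :: "real^'n^'n1" and B :: "real^'q^'n1" and H :: "real^'n^'m"
    and P0 :: "real^'n^'n" and Q :: "real^'n1^'n1" and R :: "real^'m^'m"
    and x0 :: "real^'n" and u :: "nat \<Rightarrow> real^'q" and y :: "nat \<Rightarrow> real^'m"
    and T N :: nat
  assumes "rank (stack E H) = CARD('n)"
    and "spd P0" and "spd Q" and "spd R"
    and "1 \<le> N" and "N \<le> T - 1"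
  shows "\<exists>c::real. \<forall>x :: nat \<Rightarrow> real^'n.
           JT E A B H P0 Q R x0 u y T x =
             (\<Sum>k=1..T-N-1. wnorm (Gsm E A B H P0 Q R x0 u y k)
                               (x k - xsm E A B H P0 Q R x0 u y k (x (k+1))))
             + SC E A B H P0 Q R x0 u y T N x + c"
proof -
  note rk = assms(1) and spdP0 = assms(2) and spdQ = assms(3) and spdR = assms(4)
  define Pp where "Pp = Pplus E A B H P0 Q R x0 u y"
  define Pm where "Pm = Pminus E A B H P0 Q R x0 u y"
  define xp where "xp = xplus E A B H P0 Q R x0 u y"
  define Gs where "Gs = Gsm E A B H P0 Q R x0 u y"
  define xs where "xs = xsm E A B H P0 Q R x0 u y"
  have inj: "z = 0" if "E *v z = 0" "H *v z = 0" for z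
  proof -
    have "(stack E H *v z) $ i = 0" for i
    proof (cases i)
      case (Inl a)
      have "(stack E H *v z) $ i = (E *v z) $ a" unfolding Inl by (simp add: matrix_vector_mult_def stack_def)
      then show ?thesis using that by simp
    next
      case (Inr b)
      have "(stack E H *v z) $ i = (H *v z) $ b" unfolding Inr by (simp add: matrix_vector_mult_def stack_def)
      then show ?thesis using that by simp
    qed
    then have eqz: "stack E H *v z = stack E H *v 0" by (simp add: vec_eq_iff)
    have injf: "inj ((*v) (stack E H))" using rk full_rank_injective by blast
    show ?thesis using injD[OF injf eqz] .
  qed
  have PmPp: "Pm k = A ** Pp k ** transpose A + Q" for k unfolding Pm_def Pp_def Pminus_def ..
  have spdPp: "spd (Pp k)" for k
  proof (induction k)
    case 0 then show ?case unfolding Pp_def kf_0_parts by (rule spdP0)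
  next
    case (Suc k)
    have "spd (Pm k)" unfolding PmPp using spd_Pm[OF Suc spdQ] .
    then have "spd (transpose E ** matrix_inv (Pm k) ** E + transpose H ** matrix_inv R ** H)"
      using spd_K[OF _ spdR inj] by blast
    then show ?case unfolding Pp_def kf_Suc_parts Pm_def[symmetric] by (rule spd_inv)
  qed
  have spdPm: "spd (Pm k)" for k unfolding PmPp using spd_Pm[OF spdPp spdQ] .
  define V where "V j x = wnorm (Pm j) (E *v x (Suc j) - A *v xp j - B *v u j)
     + (\<Sum>k=Suc j..T-1. wnorm Q (E *v x (k+1) - A *v x k - B *v u k))
     + (\<Sum>k=Suc j..T. wnorm R (y k - H *v x k))" for j and x :: "nat \<Rightarrow> real^'n"
  define Gt where "Gt k x = wnorm (Gs k) (x k - xs k (x (k+1)))" for k and x :: "nat \<Rightarrow> real^'n"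
  have stepA: "\<exists>c. \<forall>x. V j x = Gt (Suc j) x + V (Suc j) x + c" if jT: "j + 2 \<le> T" for j
  proof -
    have sK: "spd (transpose E ** matrix_inv (Pm j) ** E + transpose H ** matrix_inv R ** H)"
      using spd_K[OF spdPm spdR inj] by blast
    obtain c where c: "\<forall>z w. wnorm (Pm j) (E *v z - (A *v xp j + B *v u j)) + wnorm R (y (Suc j) - H *v z)
        + wnorm Q (E *v w - A *v z - B *v u (Suc j))
      = wnorm (Gs (Suc j)) (z - (xp (Suc j) + Gs (Suc j) *v (transpose A *v (matrix_inv Q *v
           (E *v w - A *v xp (Suc j) - B *v u (Suc j))))))
        + wnorm (A ** Pp (Suc j) ** transpose A + Q) (E *v w - A *v xp (Suc j) - B *v u (Suc j)) + c"
      using step_identity[OF spdPm spdQ spdR refl sK _ _ refl, of "Pp (Suc j)" "xp (Suc j)"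
          "y (Suc j)" "A *v xp j + B *v u j" A "B *v u (Suc j)"]
      unfolding Gs_def Gsm_def Pp_def xp_def Pm_def kf_Suc_parts by blast
    show ?thesis
    proof (intro exI allI)
      fix x :: "nat \<Rightarrow> real^'n"
      have s1: "(\<Sum>k=Suc j..T-1. wnorm Q (E *v x (k+1) - A *v x k - B *v u k))
        = wnorm Q (E *v x (Suc (Suc j)) - A *v x (Suc j) - B *v u (Suc j))
          + (\<Sum>k=Suc (Suc j)..T-1. wnorm Q (E *v x (k+1) - A *v x k - B *v u k))"
        using jT by (subst sum.atLeast_Suc_atMost) auto
      have s2: "(\<Sum>k=Suc j..T. wnorm R (y k - H *v x k))
        = wnorm R (y (Suc j) - H *v x (Suc j)) + (\<Sum>k=Suc (Suc j)..T. wnorm R (y k - H *v x k))"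
        using jT by (subst sum.atLeast_Suc_atMost) auto
      have e1: "E *v x (Suc j) - A *v xp j - B *v u j = E *v x (Suc j) - (A *v xp j + B *v u j)"
        by (simp add: algebra_simps)
      have e2: "xs (Suc j) (x (Suc j + 1)) = xp (Suc j) + Gs (Suc j) *v (transpose A *v (matrix_inv Q *v
           (E *v x (Suc (Suc j)) - A *v xp (Suc j) - B *v u (Suc j))))"
        unfolding xs_def xsm_def xp_def Gs_def by simp
      show "V j x = Gt (Suc j) x + V (Suc j) x + c"
        unfolding V_def Gt_def s1 s2 e1 e2 PmPp[of "Suc j"]
        using c[rule_format, of "x (Suc j)" "x (Suc (Suc j))"] by simp
    qed
  qed
  have T2: "T \<ge> 2" "N < T" using assms(5,6) by linarith+
  have stepB: "m \<le> T - N - 1 \<Longrightarrow> \<exists>c. \<forall>x. JT E A B H P0 Q R x0 u y T x = (\<Sum>k=1..m. Gt k x) + V m x + c" for m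
  proof (induction m)
    case 0
    have "JT E A B H P0 Q R x0 u y T x = V 0 x" for x
      unfolding JT_def V_def PmPp Pp_def xp_def kf_0_parts by simp
    then show ?case by (intro exI[of _ 0]) simp
  next
    case (Suc m)
    then obtain c1 where c1: "\<forall>x. JT E A B H P0 Q R x0 u y T x = (\<Sum>k=1..m. Gt k x) + V m x + c1" by auto
    have "m + 2 \<le> T" using Suc.prems T2 by linarith
    then obtain c2 where c2: "\<forall>x. V m x = Gt (Suc m) x + V (Suc m) x + c2" using stepA by blast
    show ?case
    proof (intro exI allI)
      fix x
      show "JT E A B H P0 Q R x0 u y T x = (\<Sum>k=1..Suc m. Gt k x) + V (Suc m) x + (c1 + c2)"
        using c1[rule_format, of x] c2[rule_format, of x] by simp
    qed
  qed
  obtain c where c: "\<forall>x. JT E A B H P0 Q R x0 u y T x = (\<Sum>k=1..T-N-1. Gt k x) + V (T-N-1) x + c"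
    using stepB by blast
  have sTN: "Suc (T - N - 1) = T - N" using T2 by linarith
  have VSC: "V (T-N-1) x = SC E A B H P0 Q R x0 u y T N x" for x
    unfolding V_def SC_def sTN Pm_def xp_def ..
  show ?thesis
    using c unfolding VSC Gt_def Gs_def xs_def by blast
qed

end
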